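(* Let $f,g\in R(x)$ and $h=f+g$. Suppose $val(f)=val(g)$ and that there exists $u\in\mathbb{R}^n$ such that for all sufficiently small $\epsilon>0$ we have $val(f(p^{\epsilon u}x))< val(g(p^{\epsilon u}x))$. Then $val(h)=val(f)$ and $lc(h)=lc(f)+lc(g)$.
   Context: Let $F=F(x)$, $x=(x_1,\dots,x_n)$, be the field consisting of $0$ and all formal series $f=\sum_{t\in T} a_t(x) p^t$, where $T\subset\mathbb{R}$ is discrete and bounded from below, the $a_t(x)$ are rational functions of $x$ independent of $p$, and $a_{\min T}\neq 0$; $val(f)=\min T$ and $lc(f)=a_{val(f)}$. For $\epsilon\in\mathbb{R}^n$, $p^{\epsilon}x=(p^{\epsilon_1}x_1,\dots,p^{\epsilon_n}x_n)$. For $r\in\mathbb{C}(x)$, $\deg_\epsilon(r)=val(r(p^\epsilon x))$ and $\deg(r)=-\inf_{\epsilon\ne0}\deg_\epsilon(r)/\|\epsilon\|_\infty$. $R(x)\subset F(x)$ is the subfield of those $f=\sum_t a_tp^t$ with $\inf_{t\in T,\,t>val(f)}\deg(a_t)/(t-val(f))<\infty$; for such $f$ and $\epsilon$ small, $f(p^\epsilon x)$ is the series obtained by substituting $p^\epsilon x$ into each coefficient, expanding in $p$ and summing. *)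

theory Defs
  imports Complex_Main "HOL-Library.Poly_Mapping" "HOL-Library.Extended_Real"
    "HOL-Computational_Algebra.Fraction_Field"
begin

text \<open>Variables x_i are indexed by a finite (linearly ordered) type 'n, so x = (x_i)_{i :: 'n},
  i.e. n = CARD('n).\<close>

type_synonym 'n mpoly = "('n \<Rightarrow>\<^sub>0 nat) \<Rightarrow>\<^sub>0 complex"
type_synonym 'n ratfun = "'n mpoly fract"

text \<open>Formal series sum_t a_t p^t with coefficients in C(x), represented by the coefficient
  function t \<mapsto> a_t (zero outside the support T).\<close>

type_synonym 'n pser = "real \<Rightarrow> 'n ratfun"

definition is_pser :: "'n::{finite,linorder} pser \<Rightarrow> bool" where
  "is_pser S \<longleftrightarrow> (\<forall>c. finite {t. S t \<noteq> 0 \<and> t \<le> c})"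

definition val :: "'n::{finite,linorder} pser \<Rightarrow> ereal" where
  "val S = (INF t\<in>{t. S t \<noteq> 0}. ereal t)"

definition lc :: "'n::{finite,linorder} pser \<Rightarrow> 'n ratfun" where
  "lc S = S (real_of_ereal (val S))"

text \<open>Multiplication of series (Cauchy product; the sums are finite for series)\<close>
definition pser_mult :: "'n::{finite,linorder} pser \<Rightarrow> 'n pser \<Rightarrow> 'n pser" where
  "pser_mult A B = (\<lambda>s. \<Sum>t\<in>{t. A t \<noteq> 0 \<and> B (s - t) \<noteq> 0}. A t * B (s - t))"

text \<open>P(p^eps x) for a polynomial P = sum_a c_a x^a: the series sum_a c_a x^a p^(eps . a)\<close>
definition dotp :: "('n::finite \<Rightarrow> real) \<Rightarrow> ('n \<Rightarrow>\<^sub>0 nat) \<Rightarrow> real" where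
  "dotp eps a = (\<Sum>i\<in>UNIV. eps i * real (Poly_Mapping.lookup a i))"

definition poly_subst :: "('n::{finite,linorder} \<Rightarrow> real) \<Rightarrow> 'n mpoly \<Rightarrow> 'n pser" where
  "poly_subst eps P = (\<lambda>s. Fract (\<Sum>a\<in>{a\<in>Poly_Mapping.keys P. dotp eps a = s}. Poly_Mapping.single a (Poly_Mapping.lookup P a)) 1)"

text \<open>r(p^eps x) for a rational function r = P/Q: the (unique) series S with
  S * Q(p^eps x) = P(p^eps x), i.e. the expansion of P(p^eps x)/Q(p^eps x) in p.\<close>
definition rat_subst :: "('n::{finite,linorder} \<Rightarrow> real) \<Rightarrow> 'n ratfun \<Rightarrow> 'n pser" where
  "rat_subst eps r = (THE S. is_pser S \<and>
     (\<forall>P Q. Q \<noteq> 0 \<longrightarrow> r = Fract P Q \<longrightarrow> pser_mult S (poly_subst eps Q) = poly_subst eps P))"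

text \<open>f(p^eps x) for a series f = sum_t a_t p^t: substitute into each coefficient, expand in p
  and sum (coefficientwise; the sums are finite for f in R(x) and eps small)\<close>
definition pser_subst :: "('n::{finite,linorder} \<Rightarrow> real) \<Rightarrow> 'n pser \<Rightarrow> 'n pser" where
  "pser_subst eps f = (\<lambda>s. \<Sum>t\<in>{t. f t \<noteq> 0 \<and> rat_subst eps (f t) (s - t) \<noteq> 0}.
      rat_subst eps (f t) (s - t))"

definition deg_eps :: "('n::{finite,linorder} \<Rightarrow> real) \<Rightarrow> 'n ratfun \<Rightarrow> ereal" where
  "deg_eps eps r = val (rat_subst eps r)"

definition norm_inf :: "('n::finite \<Rightarrow> real) \<Rightarrow> real" where
  "norm_inf eps = Max (range (\<lambda>i. \<bar>eps i\<bar>))"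

definition rdeg :: "'n::{finite,linorder} ratfun \<Rightarrow> real" where
  "rdeg r = - Inf ((\<lambda>eps. real_of_ereal (deg_eps eps r) / norm_inf eps) ` {eps. \<exists>i. eps i \<noteq> 0})"

text \<open>The subfield R(x): series of F(x) whose coefficients have at most linearly growing degree\<close>
definition in_R :: "'n::{finite,linorder} pser \<Rightarrow> bool" where
  "in_R f \<longleftrightarrow> is_pser f \<and>
     (SUP t\<in>{t. f t \<noteq> 0 \<and> ereal t > val f}. ereal (rdeg (f t) / (t - real_of_ereal (val f)))) < \<infinity>"

end

theory Submission
  imports Defs
begin


definition pone :: "'n::{finite,linorder} pser" where
  "pone = (\<lambda>s. if s = 0 then 1 else 0)"

lemma val_le: "A t \<noteq> 0 \<Longrightarrow> val A \<le> ereal t"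
  unfolding val_def by (rule INF_lower) auto

lemma val_eqI: "A m \<noteq> 0 \<Longrightarrow> (\<And>t. t < m \<Longrightarrow> A t = 0) \<Longrightarrow> val A = ereal m"
proof -
  assume h1: "A m \<noteq> 0" and h2: "\<And>t. t < m \<Longrightarrow> A t = 0"
  have "val A \<le> ereal m" using h1 by (rule val_le)
  moreover have "ereal m \<le> val A"
    unfolding val_def
  proof (rule INF_greatest)
    fix t assume "t \<in> {t. A t \<noteq> 0}"
    then have "\<not> t < m" using h2 by auto
    then show "ereal m \<le> ereal t" by simp
  qed
  ultimately show ?thesis by (rule antisym)
qed

lemma val_top_iff: "val A = \<infinity> \<longleftrightarrow> (\<forall>t. A t = 0)"
proof
  assume h: "val A = \<infinity>"
  show "\<forall>t. A t = 0"
  proof (rule allI, rule ccontr)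
    fix t assume "A t \<noteq> 0"
    then have "val A \<le> ereal t" by (rule val_le)
    then show False using h by simp
  qed
next
  assume "\<forall>t. A t = 0" then show "val A = \<infinity>" unfolding val_def by (simp add: top_ereal_def)
qed

lemma pser_min:
  assumes "is_pser A" "A t0 \<noteq> 0"
  shows "\<exists>m. A m \<noteq> 0 \<and> (\<forall>t. A t \<noteq> 0 \<longrightarrow> m \<le> t)"
proof -
  let ?F = "{t. A t \<noteq> 0 \<and> t \<le> t0}"
  have fin: "finite ?F" using assms(1) unfolding is_pser_def by blast
  have ne: "t0 \<in> ?F" using assms(2) by simp
  define m where "m = Min ?F"
  have "m \<in> ?F" unfolding m_def using fin ne by (intro Min_in) auto
  moreover have "\<forall>t. A t \<noteq> 0 \<longrightarrow> m \<le> t"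
  proof (intro allI impI)
    fix t assume "A t \<noteq> 0"
    show "m \<le> t"
    proof (cases "t \<le> t0")
      case True then show ?thesis unfolding m_def using fin \<open>A t \<noteq> 0\<close> by (intro Min_le) auto
    next
      case False then show ?thesis using \<open>m \<in> ?F\<close> by auto
    qed
  qed
  ultimately show ?thesis by blast
qed

lemma pser_lb: "is_pser A \<Longrightarrow> \<exists>a. \<forall>t. A t \<noteq> 0 \<longrightarrow> a \<le> t"
proof (cases "\<exists>t0. A t0 \<noteq> 0")
  case True
  assume "is_pser A"
  then show ?thesis using True pser_min by blast
next
  case False then show ?thesis by blast
qed

lemma val_attained: "is_pser A \<Longrightarrow> val A = ereal x \<Longrightarrow> A x \<noteq> 0"
proof -
  assume a: "is_pser A" "val A = ereal x"
  then have "val A \<noteq> \<infinity>" by simp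
  then obtain t0 where "A t0 \<noteq> 0" using val_top_iff by blast
  then obtain m where m: "A m \<noteq> 0" "\<forall>t. A t \<noteq> 0 \<longrightarrow> m \<le> t" using pser_min a by blast
  then have "val A = ereal m" by (intro val_eqI) auto
  then show ?thesis using a m by simp
qed

lemma mult_nz: "pser_mult A B s \<noteq> 0 \<Longrightarrow> \<exists>t. A t \<noteq> 0 \<and> B (s - t) \<noteq> 0"
proof (rule ccontr)
  assume h: "pser_mult A B s \<noteq> 0" and n: "\<not> (\<exists>t. A t \<noteq> 0 \<and> B (s - t) \<noteq> 0)"
  from n have "{t. A t \<noteq> 0 \<and> B (s - t) \<noteq> 0} = {}" by blast
  then have "pser_mult A B s = 0" unfolding pser_mult_def by (simp only: sum.empty)
  then show False using h by simp
qed

lemma mult_sum: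
  assumes "finite F" "{t. A t \<noteq> 0 \<and> B (s - t) \<noteq> 0} \<subseteq> F"
  shows "pser_mult A B s = (\<Sum>t\<in>F. A t * B (s - t))"
  unfolding pser_mult_def using assms by (intro sum.mono_neutral_left) auto

lemma is_pser_finsupp: "finite {t. A t \<noteq> 0} \<Longrightarrow> is_pser A"
  unfolding is_pser_def
proof
  fix c assume f: "finite {t. A t \<noteq> 0}"
  have "{t. A t \<noteq> 0 \<and> t \<le> c} \<subseteq> {t. A t \<noteq> 0}" by blast
  then show "finite {t. A t \<noteq> 0 \<and> t \<le> c}" using f by (rule finite_subset)
qed

lemma is_pser_pone: "is_pser pone"
  by (rule is_pser_finsupp) (simp add: pone_def)

lemma is_pser_add: "is_pser A \<Longrightarrow> is_pser B \<Longrightarrow> is_pser (\<lambda>t. A t + B t)"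
  unfolding is_pser_def
  by (rule allI, rule finite_subset[of _ "{t. A t \<noteq> 0 \<and> t \<le> _} \<union> {t. B t \<noteq> 0 \<and> t \<le> _}"]) auto

lemma is_pser_diff: "is_pser A \<Longrightarrow> is_pser B \<Longrightarrow> is_pser (\<lambda>t. A t - B t)"
  unfolding is_pser_def
  by (rule allI, rule finite_subset[of _ "{t. A t \<noteq> 0 \<and> t \<le> _} \<union> {t. B t \<noteq> 0 \<and> t \<le> _}"]) auto

lemma is_pser_zero: "is_pser (\<lambda>t. 0)"
  unfolding is_pser_def by simp

lemma mult_fin:
  assumes "is_pser A" "is_pser B"
  shows "finite {t. A t \<noteq> 0 \<and> B (s - t) \<noteq> 0}"
proof -
  obtain b where b: "\<forall>t. B t \<noteq> 0 \<longrightarrow> b \<le> t" using pser_lb assms(2) by blast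
  have "{t. A t \<noteq> 0 \<and> B (s - t) \<noteq> 0} \<subseteq> {t. A t \<noteq> 0 \<and> t \<le> s - b}"
  proof
    fix t assume "t \<in> {t. A t \<noteq> 0 \<and> B (s - t) \<noteq> 0}"
    then have t: "A t \<noteq> 0" "B (s - t) \<noteq> 0" by auto
    then have "b \<le> s - t" using b by blast
    then show "t \<in> {t. A t \<noteq> 0 \<and> t \<le> s - b}" using t by simp
  qed
  moreover have "finite {t. A t \<noteq> 0 \<and> t \<le> s - b}" using assms(1) unfolding is_pser_def by blast
  ultimately show ?thesis by (rule finite_subset)
qed

lemma mult_lb: "(\<forall>t. A t \<noteq> 0 \<longrightarrow> a \<le> t) \<Longrightarrow> (\<forall>t. B t \<noteq> 0 \<longrightarrow> b \<le> t) \<Longrightarrow>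
   pser_mult A B s \<noteq> 0 \<Longrightarrow> a + b \<le> s"
proof -
  assume a: "\<forall>t. A t \<noteq> 0 \<longrightarrow> a \<le> t" and b: "\<forall>t. B t \<noteq> 0 \<longrightarrow> b \<le> t"
    and n: "pser_mult A B s \<noteq> 0"
  obtain t where t: "A t \<noteq> 0" "B (s - t) \<noteq> 0" using mult_nz[OF n] by blast
  have "a \<le> t" using a t by blast
  moreover have "b \<le> s - t" using b t by blast
  ultimately show "a + b \<le> s" by simp
qed

lemma is_pser_mult:
  assumes "is_pser A" "is_pser B"
  shows "is_pser (pser_mult A B)"
  unfolding is_pser_def
proof
  fix c
  obtain a where a: "\<forall>t. A t \<noteq> 0 \<longrightarrow> a \<le> t" using pser_lb assms(1) by blast
  obtain b where b: "\<forall>t. B t \<noteq> 0 \<longrightarrow> b \<le> t" using pser_lb assms(2) by blast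
  have sub: "{s. pser_mult A B s \<noteq> 0 \<and> s \<le> c} \<subseteq>
     (\<lambda>(t,r). t + r) ` ({t. A t \<noteq> 0 \<and> t \<le> c - b} \<times> {r. B r \<noteq> 0 \<and> r \<le> c - a})"
  proof
    fix s assume "s \<in> {s. pser_mult A B s \<noteq> 0 \<and> s \<le> c}"
    then have s: "pser_mult A B s \<noteq> 0" "s \<le> c" by auto
    then obtain t where t: "A t \<noteq> 0" "B (s - t) \<noteq> 0" using mult_nz by blast
    then have "a \<le> t" "b \<le> s - t" using a b by auto
    then show "s \<in> (\<lambda>(t,r). t + r) ` ({t. A t \<noteq> 0 \<and> t \<le> c - b} \<times> {r. B r \<noteq> 0 \<and> r \<le> c - a})"
      using t s by (intro image_eqI[of _ _ "(t, s - t)"]) auto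
  qed
  have "finite ({t. A t \<noteq> 0 \<and> t \<le> c - b} \<times> {r. B r \<noteq> 0 \<and> r \<le> c - a})"
    using assms unfolding is_pser_def by blast
  then have "finite ((\<lambda>(t,r). t + r) ` ({t. A t \<noteq> 0 \<and> t \<le> c - b} \<times> {r. B r \<noteq> 0 \<and> r \<le> c - a}))"
    by (rule finite_imageI)
  then show "finite {s. pser_mult A B s \<noteq> 0 \<and> s \<le> c}"
    by (rule finite_subset[OF sub])
qed

lemma mult_comm: "pser_mult A B = pser_mult B A"
proof
  fix s
  show "pser_mult A B s = pser_mult B A s"
    unfolding pser_mult_def
    by (rule sum.reindex_bij_witness[of _ "\<lambda>t. s - t" "\<lambda>t. s - t"]) (auto simp: mult.commute)
qed

lemma mult_pone: "pser_mult A pone = A"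
proof
  fix s
  have "{t. A t \<noteq> 0 \<and> pone (s - t) \<noteq> 0} \<subseteq> {s}" by (auto simp: pone_def)
  then have "pser_mult A pone s = (\<Sum>t\<in>{s}. A t * pone (s - t))" by (intro mult_sum) auto
  then show "pser_mult A pone s = A s" by (simp add: pone_def)
qed

lemma mult_zero: "pser_mult (\<lambda>t. 0) B = (\<lambda>t. 0)"
  unfolding pser_mult_def by simp

lemma mult_add:
  assumes "is_pser A" "is_pser B" "is_pser C"
  shows "pser_mult (\<lambda>t. A t + B t) C = (\<lambda>s. pser_mult A C s + pser_mult B C s)"
proof
  fix s
  let ?F = "{t. A t \<noteq> 0 \<and> C (s - t) \<noteq> 0} \<union> {t. B t \<noteq> 0 \<and> C (s - t) \<noteq> 0}"
  have fin: "finite ?F" using mult_fin assms by blast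
  have "pser_mult (\<lambda>t. A t + B t) C s = (\<Sum>t\<in>?F. (A t + B t) * C (s - t))"
    using fin by (intro mult_sum) auto
  also have "\<dots> = (\<Sum>t\<in>?F. A t * C (s - t)) + (\<Sum>t\<in>?F. B t * C (s - t))"
    by (simp add: distrib_right sum.distrib)
  also have "\<dots> = pser_mult A C s + pser_mult B C s"
  proof -
    have "pser_mult A C s = (\<Sum>t\<in>?F. A t * C (s - t))" by (rule mult_sum[OF fin]) auto
    moreover have "pser_mult B C s = (\<Sum>t\<in>?F. B t * C (s - t))" by (rule mult_sum[OF fin]) auto
    ultimately show ?thesis by simp
  qed
  finally show "pser_mult (\<lambda>t. A t + B t) C s = pser_mult A C s + pser_mult B C s" .
qed

lemma mult_diff:
  assumes "is_pser A" "is_pser B" "is_pser C"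
  shows "pser_mult (\<lambda>t. A t - B t) C = (\<lambda>s. pser_mult A C s - pser_mult B C s)"
proof
  fix s
  let ?F = "{t. A t \<noteq> 0 \<and> C (s - t) \<noteq> 0} \<union> {t. B t \<noteq> 0 \<and> C (s - t) \<noteq> 0}"
  have fin: "finite ?F" using mult_fin assms by blast
  have "pser_mult (\<lambda>t. A t - B t) C s = (\<Sum>t\<in>?F. (A t - B t) * C (s - t))"
    using fin by (intro mult_sum) auto
  also have "\<dots> = (\<Sum>t\<in>?F. A t * C (s - t)) - (\<Sum>t\<in>?F. B t * C (s - t))"
    by (simp add: left_diff_distrib sum_subtractf)
  also have "\<dots> = pser_mult A C s - pser_mult B C s"
  proof -
    have "pser_mult A C s = (\<Sum>t\<in>?F. A t * C (s - t))" by (rule mult_sum[OF fin]) auto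
    moreover have "pser_mult B C s = (\<Sum>t\<in>?F. B t * C (s - t))" by (rule mult_sum[OF fin]) auto
    ultimately show ?thesis by simp
  qed
  finally show "pser_mult (\<lambda>t. A t - B t) C s = pser_mult A C s - pser_mult B C s" .
qed

lemma mult_assoc:
  assumes A: "is_pser A" and B: "is_pser B" and C: "is_pser C"
  shows "pser_mult (pser_mult A B) C = pser_mult A (pser_mult B C)"
proof
  fix s
  obtain a where a: "\<forall>t. A t \<noteq> 0 \<longrightarrow> a \<le> t" using pser_lb A by blast
  obtain b where b: "\<forall>t. B t \<noteq> 0 \<longrightarrow> b \<le> t" using pser_lb B by blast
  obtain c where c: "\<forall>t. C t \<noteq> 0 \<longrightarrow> c \<le> t" using pser_lb C by blast
  define FA where "FA = {t. A t \<noteq> 0 \<and> t \<le> s - b - c}"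
  define FC where "FC = {t. C t \<noteq> 0 \<and> t \<le> s - a - b}"
  have fA: "finite FA" using A unfolding is_pser_def FA_def by blast
  have fC: "finite FC" using C unfolding is_pser_def FC_def by blast
  have "pser_mult (pser_mult A B) C s = (\<Sum>u\<in>(\<lambda>z. s - z) ` FC. pser_mult A B u * C (s - u))"
  proof (rule mult_sum)
    show "finite ((\<lambda>z. s - z) ` FC)" using fC by simp
    show "{t. pser_mult A B t \<noteq> 0 \<and> C (s - t) \<noteq> 0} \<subseteq> (\<lambda>z. s - z) ` FC"
    proof
      fix u assume "u \<in> {t. pser_mult A B t \<noteq> 0 \<and> C (s - t) \<noteq> 0}"
      then have u: "pser_mult A B u \<noteq> 0" "C (s - u) \<noteq> 0" by auto
      then have "a + b \<le> u" using mult_lb a b by blast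
      then show "u \<in> (\<lambda>z. s - z) ` FC" using u unfolding FC_def
        by (intro image_eqI[of _ _ "s - u"]) auto
    qed
  qed
  also have "\<dots> = (\<Sum>z\<in>FC. pser_mult A B (s - z) * C z)"
    by (subst sum.reindex) (auto simp: inj_on_def)
  also have "\<dots> = (\<Sum>z\<in>FC. \<Sum>x\<in>FA. A x * B (s - z - x) * C z)"
  proof (rule sum.cong[OF refl])
    fix z assume "z \<in> FC"
    then have "c \<le> z" using c unfolding FC_def by auto
    have "pser_mult A B (s - z) = (\<Sum>x\<in>FA. A x * B (s - z - x))"
    proof (rule mult_sum[OF fA])
      show "{t. A t \<noteq> 0 \<and> B (s - z - t) \<noteq> 0} \<subseteq> FA"
      proof
        fix x assume "x \<in> {t. A t \<noteq> 0 \<and> B (s - z - t) \<noteq> 0}"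
        then have x: "A x \<noteq> 0" "B (s - z - x) \<noteq> 0" by auto
        then have "b \<le> s - z - x" using b by blast
        then show "x \<in> FA" unfolding FA_def using x \<open>c \<le> z\<close> by simp
      qed
    qed
    then show "pser_mult A B (s - z) * C z = (\<Sum>x\<in>FA. A x * B (s - z - x) * C z)"
      by (simp add: sum_distrib_right)
  qed
  also have "\<dots> = (\<Sum>x\<in>FA. \<Sum>z\<in>FC. A x * B (s - z - x) * C z)"
    by (rule sum.swap)
  also have "\<dots> = (\<Sum>x\<in>FA. A x * pser_mult B C (s - x))"
  proof (rule sum.cong[OF refl])
    fix x assume "x \<in> FA"
    then have "a \<le> x" using a unfolding FA_def by auto
    have "pser_mult B C (s - x) = pser_mult C B (s - x)" by (simp add: mult_comm)
    also have "\<dots> = (\<Sum>z\<in>FC. C z * B (s - x - z))"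
    proof (rule mult_sum[OF fC])
      show "{t. C t \<noteq> 0 \<and> B (s - x - t) \<noteq> 0} \<subseteq> FC"
      proof
        fix z assume "z \<in> {t. C t \<noteq> 0 \<and> B (s - x - t) \<noteq> 0}"
        then have z: "C z \<noteq> 0" "B (s - x - z) \<noteq> 0" by auto
        then have "b \<le> s - x - z" using b by blast
        then show "z \<in> FC" unfolding FC_def using z \<open>a \<le> x\<close> by simp
      qed
    qed
    finally have e: "pser_mult B C (s - x) = (\<Sum>z\<in>FC. C z * B (s - x - z))" .
    have "(\<Sum>z\<in>FC. A x * B (s - z - x) * C z) = (\<Sum>z\<in>FC. A x * (C z * B (s - x - z)))"
      by (intro sum.cong refl) (simp add: mult_ac diff_diff_eq add.commute)
    also have "\<dots> = A x * pser_mult B C (s - x)" by (simp add: e sum_distrib_left)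
    finally show "(\<Sum>z\<in>FC. A x * B (s - z - x) * C z) = A x * pser_mult B C (s - x)" .
  qed
  also have "\<dots> = pser_mult A (pser_mult B C) s"
  proof (rule mult_sum[symmetric])
    show "finite FA" by (rule fA)
    show "{t. A t \<noteq> 0 \<and> pser_mult B C (s - t) \<noteq> 0} \<subseteq> FA"
    proof
      fix x assume "x \<in> {t. A t \<noteq> 0 \<and> pser_mult B C (s - t) \<noteq> 0}"
      then have x: "A x \<noteq> 0" "pser_mult B C (s - x) \<noteq> 0" by auto
      then have "b + c \<le> s - x" using mult_lb b c by blast
      then show "x \<in> FA" using x unfolding FA_def by auto
    qed
  qed
  finally show "pser_mult (pser_mult A B) C s = pser_mult A (pser_mult B C) s" .
qed

lemma mult_lead:
  assumes "A m \<noteq> 0" "\<forall>t. A t \<noteq> 0 \<longrightarrow> m \<le> t" "B n \<noteq> 0" "\<forall>t. B t \<noteq> 0 \<longrightarrow> n \<le> t"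
  shows "pser_mult A B (m + n) = A m * B n" "\<And>s. s < m + n \<Longrightarrow> pser_mult A B s = 0"
proof -
  have "{t. A t \<noteq> 0 \<and> B (m + n - t) \<noteq> 0} \<subseteq> {m}"
  proof
    fix t assume "t \<in> {t. A t \<noteq> 0 \<and> B (m + n - t) \<noteq> 0}"
    then have "m \<le> t" "n \<le> m + n - t" using assms(2,4) by auto
    then show "t \<in> {m}" by simp
  qed
  then have "pser_mult A B (m + n) = (\<Sum>t\<in>{m}. A t * B (m + n - t))" by (intro mult_sum) auto
  then show "pser_mult A B (m + n) = A m * B n" by simp
  fix s assume "s < m + n"
  show "pser_mult A B s = 0"
  proof (rule ccontr)
    assume "pser_mult A B s \<noteq> 0"
    then have "m + n \<le> s" using mult_lb assms by blast
    then show False using \<open>s < m + n\<close> by simp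
  qed
qed

lemma val_mult:
  assumes "is_pser A" "is_pser B" "A t0 \<noteq> 0" "B t1 \<noteq> 0"
  shows "val (pser_mult A B) = val A + val B"
proof -
  obtain m where m: "A m \<noteq> 0" "\<forall>t. A t \<noteq> 0 \<longrightarrow> m \<le> t" using pser_min assms by blast
  obtain n where n: "B n \<noteq> 0" "\<forall>t. B t \<noteq> 0 \<longrightarrow> n \<le> t" using pser_min assms by blast
  have "val A = ereal m" using m by (intro val_eqI) auto
  moreover have "val B = ereal n" using n by (intro val_eqI) auto
  moreover have "val (pser_mult A B) = ereal (m + n)"
    using mult_lead[OF m n] m n by (intro val_eqI) simp_all
  ultimately show ?thesis by simp
qed

lemma mult_cancel:
  assumes "is_pser S1" "is_pser S2" "is_pser Q" "Q t0 \<noteq> 0"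
    and "pser_mult S1 Q = pser_mult S2 Q"
  shows "S1 = S2"
proof (rule ccontr)
  assume "S1 \<noteq> S2"
  then obtain t where t: "S1 t - S2 t \<noteq> 0" by auto
  have D: "is_pser (\<lambda>t. S1 t - S2 t)" using assms is_pser_diff by blast
  have "pser_mult (\<lambda>t. S1 t - S2 t) Q = (\<lambda>s. 0)"
    using mult_diff[OF assms(1-3)] assms(5) by simp
  moreover obtain m where m: "S1 m - S2 m \<noteq> 0" "\<forall>t. S1 t - S2 t \<noteq> 0 \<longrightarrow> m \<le> t"
    using pser_min[OF D, of t] t by blast
  moreover obtain n where n: "Q n \<noteq> 0" "\<forall>t. Q t \<noteq> 0 \<longrightarrow> n \<le> t"
    using pser_min[OF assms(3) assms(4)] by blast
  ultimately have "(S1 m - S2 m) * Q n = 0"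
    using mult_lead(1)[of "\<lambda>t. S1 t - S2 t" m Q n] by simp
  then show False using m n by simp
qed


primrec wpow :: "'n::{finite,linorder} pser \<Rightarrow> nat \<Rightarrow> 'n pser" where
  "wpow W 0 = pone"
| "wpow W (Suc k) = pser_mult (wpow W k) W"

definition tsum :: "'n::{finite,linorder} pser \<Rightarrow> nat \<Rightarrow> 'n pser" where
  "tsum W N = (\<lambda>s. \<Sum>k<N. wpow W k s)"

lemma inv_normalized:
  fixes G :: "'n::{finite,linorder} pser"
  assumes fin: "finite {t. G t \<noteq> 0}" and G0: "G 0 = 1" and Gpos: "\<forall>t. G t \<noteq> 0 \<longrightarrow> 0 \<le> t"
  shows "\<exists>H. is_pser H \<and> pser_mult H G = pone"
proof -
  define W where "W = (\<lambda>s. pone s - G s)"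
  have Wpos: "W s \<noteq> 0 \<Longrightarrow> 0 < s" for s
    using Gpos G0 unfolding W_def pone_def by (cases "s = 0") (auto simp: less_le)
  have finW: "finite {t. W t \<noteq> 0}"
    by (rule finite_subset[of _ "insert 0 {t. G t \<noteq> 0}"]) (auto simp: W_def pone_def fin)
  have GW: "G = (\<lambda>s. pone s - W s)" unfolding W_def by simp
  define \<delta> where "\<delta> = Min (insert 1 {t. W t \<noteq> 0})"
  have dpos: "0 < \<delta>" unfolding \<delta>_def using finW Wpos by (subst Min_gr_iff) auto
  have dle: "W t \<noteq> 0 \<Longrightarrow> \<delta> \<le> t" for t unfolding \<delta>_def using finW by (intro Min_le) auto
  have pW: "is_pser W" using finW by (rule is_pser_finsupp)
  have pG: "is_pser G" using fin by (rule is_pser_finsupp)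
  have pwp: "is_pser (wpow W k)" for k
    by (induct k) (auto simp: is_pser_pone is_pser_mult pW)
  have wsupp: "wpow W k s \<noteq> 0 \<Longrightarrow> real k * \<delta> \<le> s" for k s
  proof (induct k arbitrary: s)
    case 0 then show ?case by (simp add: pone_def split: if_splits)
  next
    case (Suc k)
    then obtain t where t: "wpow W k t \<noteq> 0" "W (s - t) \<noteq> 0" using mult_nz by fastforce
    have "real k * \<delta> \<le> t" using Suc t by blast
    moreover have "\<delta> \<le> s - t" using dle t by blast
    ultimately show ?case by (simp add: algebra_simps)
  qed
  have tsum0: "tsum W 0 = (\<lambda>s. 0)" by (simp add: tsum_def)
  have tsumS: "tsum W (Suc N) = (\<lambda>s. tsum W N s + wpow W N s)" for N
    by (simp add: tsum_def)
  have ptsum: "is_pser (tsum W N)" for N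
    by (induct N) (auto simp: tsum0 tsumS is_pser_zero intro!: is_pser_add pwp)
  have tele: "pser_mult (tsum W N) G = (\<lambda>s. pone s - wpow W N s)" for N
  proof (induct N)
    case 0 then show ?case by (simp add: tsum0 mult_zero)
  next
    case (Suc N)
    have "pser_mult (wpow W N) G = pser_mult G (wpow W N)" by (rule mult_comm)
    also have "\<dots> = (\<lambda>s. pser_mult pone (wpow W N) s - pser_mult W (wpow W N) s)"
      unfolding GW by (rule mult_diff[OF is_pser_pone pW pwp])
    also have "\<dots> = (\<lambda>s. wpow W N s - wpow W (Suc N) s)"
      by (simp add: mult_comm[of pone] mult_pone mult_comm[of W])
    finally have e: "pser_mult (wpow W N) G = (\<lambda>s. wpow W N s - wpow W (Suc N) s)" .
    show ?case unfolding tsumS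
      by (subst mult_add[OF ptsum pwp pG]) (simp add: Suc e)
  qed
  have stable: "N \<le> N' \<Longrightarrow> s < real N * \<delta> \<Longrightarrow> tsum W N' s = tsum W N s" for N N' s
  proof (induct N' rule: dec_induct)
    case base then show ?case by simp
  next
    case (step n)
    have "wpow W n s = 0"
    proof (rule ccontr)
      assume "wpow W n s \<noteq> 0"
      then have "real n * \<delta> \<le> s" by (rule wsupp)
      moreover have "real N * \<delta> \<le> real n * \<delta>" using step dpos by (simp add: mult_right_mono)
      ultimately show False using step by simp
    qed
    then show ?case using step by (simp add: tsumS)
  qed
  define Nf where "Nf s = Suc (nat \<lceil>s / \<delta>\<rceil>)" for s
  have Nf: "s < real (Nf s) * \<delta>" for s
  proof -
    have "s / \<delta> \<le> real (nat \<lceil>s / \<delta>\<rceil>)" by linarith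
    then have "s \<le> real (nat \<lceil>s / \<delta>\<rceil>) * \<delta>" using dpos by (simp add: divide_le_eq)
    then show ?thesis unfolding Nf_def using dpos by (simp add: algebra_simps)
  qed
  define H where "H = (\<lambda>s. tsum W (Nf s) s)"
  have eqH: "s < real N * \<delta> \<Longrightarrow> H s = tsum W N s" for s N
    unfolding H_def using stable Nf by (metis nat_le_linear)
  have pH: "is_pser H"
    unfolding is_pser_def
  proof
    fix c
    have "{s. H s \<noteq> 0 \<and> s \<le> c} \<subseteq> {s. tsum W (Nf c) s \<noteq> 0 \<and> s \<le> c}"
      using eqH Nf by (smt (verit) mem_Collect_eq subsetI)
    moreover have "finite {s. tsum W (Nf c) s \<noteq> 0 \<and> s \<le> c}"
      using ptsum unfolding is_pser_def by blast
    ultimately show "finite {s. H s \<noteq> 0 \<and> s \<le> c}" by (rule finite_subset)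
  qed
  have "pser_mult H G = pone"
  proof
    fix s
    have "pser_mult H G s = pser_mult (tsum W (Nf s)) G s"
    proof -
      have ev: "G (s - t) \<noteq> 0 \<Longrightarrow> H t = tsum W (Nf s) t" for t
        using Gpos Nf[of s] by (intro eqH) (smt (verit))
      have "{t. H t \<noteq> 0 \<and> G (s - t) \<noteq> 0} = {t. tsum W (Nf s) t \<noteq> 0 \<and> G (s - t) \<noteq> 0}"
        using ev by auto
      then show ?thesis unfolding pser_mult_def using ev by (auto intro!: sum.cong)
    qed
    also have "\<dots> = pone s - wpow W (Nf s) s" by (simp add: tele)
    also have "wpow W (Nf s) s = 0" using wsupp Nf by (meson not_le)
    finally show "pser_mult H G s = pone s" by simp
  qed
  then show ?thesis using pH by blast
qed

lemma mult_shift: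
  fixes A B :: "'n::{finite,linorder} pser"
  assumes "x \<noteq> 0" "y \<noteq> 0"
  shows "pser_mult (\<lambda>t. x * A (t + a)) (\<lambda>t. y * B (t + b)) s = x * y * pser_mult A B (s + a + b)"
proof -
  have "pser_mult (\<lambda>t. x * A (t + a)) (\<lambda>t. y * B (t + b)) s =
      (\<Sum>t\<in>{t. A (t + a) \<noteq> 0 \<and> B (s - t + b) \<noteq> 0}. x * y * (A (t + a) * B (s - t + b)))"
    unfolding pser_mult_def using assms by (auto simp: algebra_simps)
  also have "\<dots> = (\<Sum>t\<in>{t. A t \<noteq> 0 \<and> B (s + a + b - t) \<noteq> 0}. x * y * (A t * B (s + a + b - t)))"
    by (rule sum.reindex_bij_witness[of _ "\<lambda>t. t - a" "\<lambda>t. t + a"]) (auto simp: algebra_simps)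
  also have "\<dots> = x * y * pser_mult A B (s + a + b)"
    unfolding pser_mult_def by (simp add: sum_distrib_left)
  finally show ?thesis .
qed

lemma is_pser_shift:
  assumes "is_pser A"
  shows "is_pser (\<lambda>t. x * A (t + a))"
  unfolding is_pser_def
proof
  fix c
  have sub: "{t. x * A (t + a) \<noteq> 0 \<and> t \<le> c} \<subseteq> (\<lambda>t. t - a) ` {t. A t \<noteq> 0 \<and> t \<le> c + a}"
    by (auto intro!: image_eqI[of _ _ "_ + a"])
  have "finite {t. A t \<noteq> 0 \<and> t \<le> c + a}" using assms unfolding is_pser_def by blast
  then have "finite ((\<lambda>t. t - a) ` {t. A t \<noteq> 0 \<and> t \<le> c + a})" by (rule finite_imageI)
  then show "finite {t. x * A (t + a) \<noteq> 0 \<and> t \<le> c}" by (rule finite_subset[OF sub])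
qed

lemma inv_exists:
  fixes G :: "'n::{finite,linorder} pser"
  assumes fin: "finite {t. G t \<noteq> 0}" and nz: "G t0 \<noteq> 0"
  shows "\<exists>H. is_pser H \<and> pser_mult H G = pone"
proof -
  obtain m where m: "G m \<noteq> 0" "\<forall>t. G t \<noteq> 0 \<longrightarrow> m \<le> t"
    using pser_min[OF is_pser_finsupp[OF fin] nz] by blast
  define c where "c = G m"
  have c: "c \<noteq> 0" using m c_def by simp
  define G' where "G' = (\<lambda>t. (1 / c) * G (t + m))"
  have fin': "finite {t. G' t \<noteq> 0}"
  proof -
    have sub: "{t. G' t \<noteq> 0} \<subseteq> (\<lambda>t. t - m) ` {t. G t \<noteq> 0}"
      unfolding G'_def by (auto intro!: image_eqI[of _ _ "_ + m"])
    have "finite ((\<lambda>t. t - m) ` {t. G t \<noteq> 0})" using fin by (rule finite_imageI)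
    then show ?thesis by (rule finite_subset[OF sub])
  qed
  have G'0: "G' 0 = 1" unfolding G'_def c_def using m by simp
  have G'pos: "\<forall>t. G' t \<noteq> 0 \<longrightarrow> 0 \<le> t" unfolding G'_def using m by force
  obtain H' where H': "is_pser H'" "pser_mult H' G' = pone"
    using inv_normalized[OF fin' G'0 G'pos] by blast
  have GG: "G = (\<lambda>t. c * G' (t + - m))" unfolding G'_def using c by simp
  define H where "H = (\<lambda>t. (1 / c) * H' (t + m))"
  have "pser_mult H G = pone"
  proof
    fix s
    have "pser_mult H G s = (1 / c) * c * pser_mult H' G' (s + m + - m)"
      unfolding H_def GG using c by (intro mult_shift) auto
    then show "pser_mult H G s = pone s" using c H' by simp
  qed
  moreover have "is_pser H" unfolding H_def by (rule is_pser_shift[OF H'(1)])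
  ultimately show ?thesis by blast
qed


definition wcomp :: "('n::{finite,linorder} \<Rightarrow> real) \<Rightarrow> real \<Rightarrow> 'n mpoly \<Rightarrow> 'n mpoly" where
  "wcomp eps s P = (\<Sum>a\<in>{a\<in>Poly_Mapping.keys P. dotp eps a = s}. Poly_Mapping.single a (Poly_Mapping.lookup P a))"

lemma poly_subst_wcomp: "poly_subst eps P s = Fract (wcomp eps s P) 1"
  unfolding poly_subst_def wcomp_def by simp

lemma dotp_add: "dotp eps (a + b) = dotp eps a + dotp eps b"
  unfolding dotp_def by (simp add: lookup_add distrib_left sum.distrib)

lemma dotp_scale: "dotp (\<lambda>i. e * u i) a = e * dotp u a"
  unfolding dotp_def by (simp add: sum_distrib_left mult.assoc)

lemma lookup_wcomp:
  "Poly_Mapping.lookup (wcomp eps s P) b = (if dotp eps b = s then Poly_Mapping.lookup P b else 0)"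
proof -
  have "Poly_Mapping.lookup (wcomp eps s P) b =
     (\<Sum>a\<in>{a\<in>Poly_Mapping.keys P. dotp eps a = s}. if a = b then Poly_Mapping.lookup P a else 0)"
    unfolding wcomp_def by (simp add: lookup_sum lookup_single when_def)
  also have "\<dots> = (if b \<in> {a\<in>Poly_Mapping.keys P. dotp eps a = s} then Poly_Mapping.lookup P b else 0)"
    by (simp add: sum.delta')
  also have "\<dots> = (if dotp eps b = s then Poly_Mapping.lookup P b else 0)"
    by (auto simp: in_keys_iff)
  finally show ?thesis .
qed

lemma wcomp_zero_iff: "wcomp eps s P = 0 \<longleftrightarrow> (\<forall>b\<in>Poly_Mapping.keys P. dotp eps b \<noteq> s)"
proof
  assume "wcomp eps s P = 0"
  then show "\<forall>b\<in>Poly_Mapping.keys P. dotp eps b \<noteq> s"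
    by (metis in_keys_iff lookup_wcomp lookup_zero)
next
  assume "\<forall>b\<in>Poly_Mapping.keys P. dotp eps b \<noteq> s"
  then show "wcomp eps s P = 0"
    by (intro poly_mapping_eqI) (auto simp: lookup_wcomp in_keys_iff)
qed

lemma Fract1_zero: "Fract (x::'a::idom) 1 = 0 \<longleftrightarrow> x = 0"
  by (simp add: Zero_fract_def eq_fract)

lemma Fract1_add: "Fract (x + y) (1::'a::idom) = Fract x 1 + Fract y 1"
  using add_fract[of "1::'a" 1 x y] by simp

lemma Fract1_sum: "Fract (sum f A) (1::'a::idom) = (\<Sum>i\<in>A. Fract (f i) 1)"
proof (induct A rule: infinite_finite_induct)
  case (infinite A) then show ?case by (simp add: Zero_fract_def)
next
  case empty then show ?case by (simp add: Zero_fract_def)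
next
  case (insert x F)
  then have "Fract (sum f (insert x F)) 1 = Fract (f x) 1 + Fract (sum f F) 1"
    by (simp add: Fract1_add)
  then show ?case using insert by simp
qed

lemma poly_subst_nz: "poly_subst eps P s \<noteq> 0 \<longleftrightarrow> (\<exists>b\<in>Poly_Mapping.keys P. dotp eps b = s)"
  by (simp add: poly_subst_wcomp Fract1_zero wcomp_zero_iff)

lemma poly_subst_finsupp: "finite {t. poly_subst eps P t \<noteq> 0}"
  by (rule finite_subset[of _ "dotp eps ` Poly_Mapping.keys P"]) (auto simp: poly_subst_nz)

lemma is_pser_poly_subst: "is_pser (poly_subst eps P)"
  by (rule is_pser_finsupp[OF poly_subst_finsupp])

lemma val_poly_subst:
  assumes "P \<noteq> 0"
  shows "val (poly_subst eps P) = ereal (Min (dotp eps ` Poly_Mapping.keys P))"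
proof (rule val_eqI)
  have "Poly_Mapping.keys P \<noteq> {}" using assms by simp
  then have "Min (dotp eps ` Poly_Mapping.keys P) \<in> dotp eps ` Poly_Mapping.keys P"
    by (intro Min_in) auto
  then show "poly_subst eps P (Min (dotp eps ` Poly_Mapping.keys P)) \<noteq> 0"
    by (auto simp: poly_subst_nz)
next
  fix t assume t: "t < Min (dotp eps ` Poly_Mapping.keys P)"
  show "poly_subst eps P t = 0"
  proof (rule ccontr)
    assume "poly_subst eps P t \<noteq> 0"
    then obtain b where b: "b \<in> Poly_Mapping.keys P" "dotp eps b = t" by (auto simp: poly_subst_nz)
    then have "Min (dotp eps ` Poly_Mapping.keys P) \<le> t"
      by (intro Min_le) auto
    then show False using t by simp
  qed
qed

lemma poly_decomp: "P = (\<Sum>t\<in>dotp eps ` Poly_Mapping.keys P. wcomp eps t P)"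
proof (rule poly_mapping_eqI)
  fix b
  have "Poly_Mapping.lookup (\<Sum>t\<in>dotp eps ` Poly_Mapping.keys P. wcomp eps t P) b =
     (\<Sum>t\<in>dotp eps ` Poly_Mapping.keys P. if dotp eps b = t then Poly_Mapping.lookup P b else 0)"
    by (simp add: lookup_sum lookup_wcomp)
  also have "\<dots> = (if dotp eps b \<in> dotp eps ` Poly_Mapping.keys P then Poly_Mapping.lookup P b else 0)"
    by (simp add: sum.delta)
  also have "\<dots> = Poly_Mapping.lookup P b" by (auto simp: in_keys_iff)
  finally show "Poly_Mapping.lookup P b = Poly_Mapping.lookup (\<Sum>t\<in>dotp eps ` Poly_Mapping.keys P. wcomp eps t P) b"
    by simp
qed

lemma wcomp_add: "wcomp eps s (X + Y) = wcomp eps s X + wcomp eps s Y"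
  by (rule poly_mapping_eqI) (simp add: lookup_wcomp lookup_add)

lemma wcomp_0: "wcomp eps s 0 = 0"
  by (rule poly_mapping_eqI) (simp add: lookup_wcomp)

lemma wcomp_sum: "wcomp eps s (sum f A) = (\<Sum>i\<in>A. wcomp eps s (f i))"
  by (induct A rule: infinite_finite_induct) (auto simp: wcomp_0 wcomp_add)

lemma keys_wcomp: "Poly_Mapping.keys (wcomp eps t P) \<subseteq> {a. dotp eps a = t}"
  by (auto simp: in_keys_iff lookup_wcomp split: if_splits)

lemma wcomp_homog:
  assumes "Poly_Mapping.keys X \<subseteq> {a. dotp eps a = w}"
  shows "wcomp eps s X = (if w = s then X else 0)"
  by (rule poly_mapping_eqI) (use assms in \<open>auto simp: lookup_wcomp in_keys_iff\<close>)

lemma keys_wcomp_mult: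
  "Poly_Mapping.keys (wcomp eps t P * wcomp eps r Q) \<subseteq> {a. dotp eps a = t + r}"
proof -
  have "Poly_Mapping.keys (wcomp eps t P * wcomp eps r Q) \<subseteq>
     {a + b |a b. a \<in> Poly_Mapping.keys (wcomp eps t P) \<and> b \<in> Poly_Mapping.keys (wcomp eps r Q)}"
    by (rule keys_mult)
  also have "\<dots> \<subseteq> {a. dotp eps a = t + r}"
  proof
    fix x assume "x \<in> {a + b |a b. a \<in> Poly_Mapping.keys (wcomp eps t P) \<and> b \<in> Poly_Mapping.keys (wcomp eps r Q)}"
    then obtain a b where ab: "x = a + b" "a \<in> Poly_Mapping.keys (wcomp eps t P)" "b \<in> Poly_Mapping.keys (wcomp eps r Q)"
      by blast
    have "dotp eps a = t" using ab(2) keys_wcomp[of eps t P] by blast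
    moreover have "dotp eps b = r" using ab(3) keys_wcomp[of eps r Q] by blast
    ultimately show "x \<in> {a. dotp eps a = t + r}" using ab(1) by (simp add: dotp_add)
  qed
  finally show ?thesis .
qed

lemma wcomp_mult:
  "wcomp eps s (P * Q) = (\<Sum>t\<in>dotp eps ` Poly_Mapping.keys P. wcomp eps t P * wcomp eps (s - t) Q)"
proof -
  let ?TP = "dotp eps ` Poly_Mapping.keys P" and ?TQ = "dotp eps ` Poly_Mapping.keys Q"
  have "P * Q = (\<Sum>t\<in>?TP. wcomp eps t P) * (\<Sum>r\<in>?TQ. wcomp eps r Q)"
    using poly_decomp[of P eps] poly_decomp[of Q eps] by simp
  also have "\<dots> = (\<Sum>t\<in>?TP. \<Sum>r\<in>?TQ. wcomp eps t P * wcomp eps r Q)"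
    by (simp add: sum_product)
  finally have "wcomp eps s (P * Q) = (\<Sum>t\<in>?TP. \<Sum>r\<in>?TQ. wcomp eps s (wcomp eps t P * wcomp eps r Q))"
    by (simp add: wcomp_sum)
  also have "\<dots> = (\<Sum>t\<in>?TP. \<Sum>r\<in>?TQ. if r = s - t then wcomp eps t P * wcomp eps r Q else 0)"
    by (intro sum.cong refl, subst wcomp_homog[OF keys_wcomp_mult]) auto
  also have "\<dots> = (\<Sum>t\<in>?TP. wcomp eps t P * wcomp eps (s - t) Q)"
  proof (rule sum.cong[OF refl])
    fix t
    have "(\<Sum>r\<in>?TQ. if r = s - t then wcomp eps t P * wcomp eps r Q else 0) =
        (if s - t \<in> ?TQ then wcomp eps t P * wcomp eps (s - t) Q else 0)"
      by (simp add: sum.delta')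
    also have "\<dots> = wcomp eps t P * wcomp eps (s - t) Q"
    proof (cases "s - t \<in> ?TQ")
      case False
      then have "wcomp eps (s - t) Q = 0" by (subst wcomp_zero_iff) (auto simp: image_iff)
      then show ?thesis using False by simp
    qed simp
    finally show "(\<Sum>r\<in>?TQ. if r = s - t then wcomp eps t P * wcomp eps r Q else 0) =
        wcomp eps t P * wcomp eps (s - t) Q" .
  qed
  finally show ?thesis .
qed

lemma poly_subst_mult: "poly_subst eps (P * Q) = pser_mult (poly_subst eps P) (poly_subst eps Q)"
proof
  fix s
  let ?TP = "dotp eps ` Poly_Mapping.keys P"
  have "pser_mult (poly_subst eps P) (poly_subst eps Q) s =
      (\<Sum>t\<in>?TP. poly_subst eps P t * poly_subst eps Q (s - t))"
    by (rule mult_sum) (auto simp: poly_subst_nz)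
  also have "\<dots> = (\<Sum>t\<in>?TP. Fract (wcomp eps t P * wcomp eps (s - t) Q) 1)"
    by (simp add: poly_subst_wcomp)
  also have "\<dots> = poly_subst eps (P * Q) s"
    by (simp add: poly_subst_wcomp wcomp_mult Fract1_sum)
  finally show "poly_subst eps (P * Q) s = pser_mult (poly_subst eps P) (poly_subst eps Q) s" ..
qed

lemma keys_uminus': "Poly_Mapping.keys (- P) = Poly_Mapping.keys (P::'n mpoly)"
  by (auto simp: in_keys_iff)


lemma poly_subst_nonzero:
  assumes "Q \<noteq> 0" shows "\<exists>t. poly_subst eps Q t \<noteq> 0"
proof -
  obtain b where "b \<in> Poly_Mapping.keys Q" using assms by fastforce
  then show ?thesis by (auto simp: poly_subst_nz)
qed

lemma rat_subst_char:
  fixes r :: "'n::{finite,linorder} ratfun"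
  assumes r: "r = Fract P Q" and Q: "Q \<noteq> 0"
  shows "is_pser (rat_subst eps r) \<and> pser_mult (rat_subst eps r) (poly_subst eps Q) = poly_subst eps P"
proof -
  let ?Q = "poly_subst eps Q" and ?P = "poly_subst eps P"
  obtain t0 where t0: "?Q t0 \<noteq> 0" using poly_subst_nonzero[OF Q] by blast
  obtain H where H: "is_pser H" "pser_mult H ?Q = pone"
    using inv_exists[OF poly_subst_finsupp t0] by blast
  define S0 where "S0 = pser_mult ?P H"
  have pS0: "is_pser S0" unfolding S0_def by (intro is_pser_mult is_pser_poly_subst H)
  have S0Q: "pser_mult S0 ?Q = ?P"
    unfolding S0_def by (simp add: mult_assoc is_pser_poly_subst H mult_pone)
  define \<Phi> where "\<Phi> S \<longleftrightarrow> is_pser S \<and>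
     (\<forall>P Q. Q \<noteq> 0 \<longrightarrow> r = Fract P Q \<longrightarrow> pser_mult S (poly_subst eps Q) = poly_subst eps P)" for S
  have "\<Phi> S0"
    unfolding \<Phi>_def
  proof (intro conjI pS0 allI impI)
    fix P' Q' assume Q': "Q' \<noteq> 0" and r': "r = Fract P' Q'"
    have eq: "P' * Q = P * Q'" using r r' Q Q' by (simp add: eq_fract)
    let ?X = "pser_mult S0 (poly_subst eps Q')"
    have "pser_mult ?X ?Q = pser_mult S0 (pser_mult (poly_subst eps Q') ?Q)"
      by (simp add: mult_assoc pS0 is_pser_poly_subst)
    also have "\<dots> = pser_mult S0 (pser_mult ?Q (poly_subst eps Q'))"
      by (simp add: mult_comm[of "poly_subst eps Q'"])
    also have "\<dots> = pser_mult (pser_mult S0 ?Q) (poly_subst eps Q')"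
      by (simp add: mult_assoc pS0 is_pser_poly_subst)
    also have "\<dots> = poly_subst eps (P * Q')" by (simp add: S0Q poly_subst_mult)
    also have "\<dots> = pser_mult (poly_subst eps P') ?Q" by (simp add: eq[symmetric] poly_subst_mult)
    finally show "?X = poly_subst eps P'"
      using mult_cancel[OF _ is_pser_poly_subst is_pser_poly_subst t0]
        is_pser_mult[OF pS0 is_pser_poly_subst] by blast
  qed
  moreover have "S = S0" if "\<Phi> S" for S
  proof -
    have "is_pser S" "pser_mult S ?Q = ?P" using that r Q unfolding \<Phi>_def by auto
    then show ?thesis using S0Q mult_cancel[OF _ pS0 is_pser_poly_subst t0] by metis
  qed
  ultimately have "rat_subst eps r = S0"
    unfolding rat_subst_def \<Phi>_def[symmetric] by (rule the_equality)
  then show ?thesis using pS0 S0Q by simp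
qed

lemma is_pser_rat_subst: "is_pser (rat_subst eps (r::'n::{finite,linorder} ratfun))"
proof (cases r)
  case (Fract P Q) then show ?thesis using rat_subst_char by blast
qed

lemma val_rat_subst:
  fixes r :: "'n::{finite,linorder} ratfun"
  assumes r: "r = Fract P Q" and Q: "Q \<noteq> 0" and P: "P \<noteq> 0"
  shows "val (rat_subst eps r) = ereal (Min (dotp eps ` Poly_Mapping.keys P) - Min (dotp eps ` Poly_Mapping.keys Q))"
proof -
  let ?S = "rat_subst eps r"
  have c: "is_pser ?S" "pser_mult ?S (poly_subst eps Q) = poly_subst eps P"
    using rat_subst_char[OF r Q] by auto
  obtain t1 where t1: "poly_subst eps P t1 \<noteq> 0" using poly_subst_nonzero[OF P] by blast
  obtain t0 where t0: "poly_subst eps Q t0 \<noteq> 0" using poly_subst_nonzero[OF Q] by blast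
  obtain t2 where t2: "?S t2 \<noteq> 0"
  proof (rule ccontr)
    assume "\<not> thesis"
    then have "?S = (\<lambda>t. 0)" using that by auto
    then have "pser_mult ?S (poly_subst eps Q) = (\<lambda>t. 0)" by (simp add: mult_zero)
    then have e: "poly_subst eps P = (\<lambda>t. 0)" using c(2) by simp
    have "poly_subst eps P t1 = 0" by (subst e) (rule refl)
    then show False using t1 by simp
  qed
  have "val (poly_subst eps P) = val ?S + val (poly_subst eps Q)"
    using val_mult[OF c(1) is_pser_poly_subst t2 t0] c(2) by simp
  moreover obtain m where "?S m \<noteq> 0" "\<forall>t. ?S t \<noteq> 0 \<longrightarrow> m \<le> t" using pser_min[OF c(1) t2] by blast
  then have "val ?S = ereal m" by (intro val_eqI) auto
  ultimately show ?thesis using val_poly_subst[OF P] val_poly_subst[OF Q] by simp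
qed


lemma norm_inf_ge: "\<bar>eps i\<bar> \<le> norm_inf (eps::'n::finite \<Rightarrow> real)"
  unfolding norm_inf_def by (rule Max_ge) auto

lemma norm_inf_nonneg: "0 \<le> norm_inf (eps::'n::finite \<Rightarrow> real)"
  using norm_inf_ge[of eps undefined] by linarith

lemma norm_inf_pos: "eps i \<noteq> 0 \<Longrightarrow> 0 < norm_inf (eps::'n::finite \<Rightarrow> real)"
  using norm_inf_ge[of eps i] by linarith

lemma norm_inf_scale:
  assumes "0 \<le> e" shows "norm_inf (\<lambda>i. e * u i) \<le> e * norm_inf (u::'n::finite \<Rightarrow> real)"
  unfolding norm_inf_def[of "\<lambda>i. e * u i"]
proof (rule Max.boundedI)
  show "finite (range (\<lambda>i. \<bar>e * u i\<bar>))" by simp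
  show "range (\<lambda>i. \<bar>e * u i\<bar>) \<noteq> {}" by simp
  fix x assume "x \<in> range (\<lambda>i. \<bar>e * u i\<bar>)"
  then obtain i where "x = \<bar>e * u i\<bar>" by blast
  then have "x = e * \<bar>u i\<bar>" using assms by (simp add: abs_mult)
  also have "\<dots> \<le> e * norm_inf u" using assms norm_inf_ge[of u i] by (rule mult_left_mono[rotated])
  finally show "x \<le> e * norm_inf u" .
qed

lemma norm_inf_zero: "norm_inf (\<lambda>i::'n::finite. 0::real) = 0"
  unfolding norm_inf_def by simp

definition kdeg :: "('n::finite \<Rightarrow>\<^sub>0 nat) \<Rightarrow> real" where
  "kdeg a = (\<Sum>i\<in>UNIV. real (Poly_Mapping.lookup a i))"

lemma kdeg_nonneg: "0 \<le> kdeg a"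
  unfolding kdeg_def by (rule sum_nonneg) simp

lemma dotp_bound: "\<bar>dotp eps a\<bar> \<le> norm_inf eps * kdeg a"
proof -
  have "\<bar>dotp eps a\<bar> \<le> (\<Sum>i\<in>UNIV. \<bar>eps i * real (Poly_Mapping.lookup a i)\<bar>)"
    unfolding dotp_def by (rule sum_abs)
  also have "\<dots> \<le> (\<Sum>i\<in>UNIV. norm_inf eps * real (Poly_Mapping.lookup a i))"
    by (rule sum_mono) (simp add: abs_mult mult_right_mono norm_inf_ge)
  also have "\<dots> = norm_inf eps * kdeg a" unfolding kdeg_def by (simp add: sum_distrib_left)
  finally show ?thesis .
qed

definition kpoly :: "'n::{finite,linorder} mpoly \<Rightarrow> real" where
  "kpoly P = (\<Sum>a\<in>Poly_Mapping.keys P. kdeg a)"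

lemma kdeg_le_kpoly: "a \<in> Poly_Mapping.keys P \<Longrightarrow> kdeg a \<le> kpoly P"
  unfolding kpoly_def by (rule member_le_sum) (auto simp: kdeg_nonneg)

lemma Min_dotp_lower:
  assumes "P \<noteq> 0"
  shows "- (norm_inf eps * kpoly P) \<le> Min (dotp eps ` Poly_Mapping.keys P)"
proof (subst Min_ge_iff)
  show "finite (dotp eps ` Poly_Mapping.keys P)" by simp
  show "dotp eps ` Poly_Mapping.keys P \<noteq> {}" using assms by simp
  show "\<forall>a\<in>dotp eps ` Poly_Mapping.keys P. - (norm_inf eps * kpoly P) \<le> a"
  proof
    fix x assume "x \<in> dotp eps ` Poly_Mapping.keys P"
    then obtain a where a: "a \<in> Poly_Mapping.keys P" "x = dotp eps a" by blast
    have "norm_inf eps * kdeg a \<le> norm_inf eps * kpoly P"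
      using kdeg_le_kpoly[OF a(1)] norm_inf_nonneg by (rule mult_left_mono)
    then show "- (norm_inf eps * kpoly P) \<le> x" using dotp_bound[of eps a] a(2) by linarith
  qed
qed

lemma Min_dotp_upper:
  assumes "P \<noteq> 0"
  shows "Min (dotp eps ` Poly_Mapping.keys P) \<le> norm_inf eps * kpoly P"
proof -
  obtain a where a: "a \<in> Poly_Mapping.keys P" using assms by fastforce
  have "Min (dotp eps ` Poly_Mapping.keys P) \<le> dotp eps a" using a by (intro Min_le) auto
  also have "\<dots> \<le> norm_inf eps * kdeg a" using dotp_bound[of eps a] by linarith
  also have "\<dots> \<le> norm_inf eps * kpoly P"
    using kdeg_le_kpoly[OF a] norm_inf_nonneg by (rule mult_left_mono)
  finally show ?thesis .
qed

lemma Fract_nz_num: "Fract P Q \<noteq> 0 \<Longrightarrow> P \<noteq> (0::'a::idom)"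
  by (auto simp: Zero_fract_def eq_fract)

lemma rdeg_bound:
  fixes r :: "'n::{finite,linorder} ratfun"
  assumes r0: "r \<noteq> 0"
  shows "ereal (- rdeg r * norm_inf eps) \<le> val (rat_subst eps r)"
proof -
  obtain P Q where r: "r = Fract P Q" and Q: "Q \<noteq> 0" by (cases r) auto
  have P: "P \<noteq> 0" using r r0 Fract_nz_num by blast
  define dd where "dd eps' = Min (dotp eps' ` Poly_Mapping.keys P) - Min (dotp eps' ` Poly_Mapping.keys Q)" for eps'
  have vr: "val (rat_subst eps' r) = ereal (dd eps')" for eps'
    unfolding dd_def by (rule val_rat_subst[OF r Q P])
  have ddlb: "- (norm_inf eps' * (kpoly P + kpoly Q)) \<le> dd eps'" for eps'
    using Min_dotp_lower[OF P, of eps'] Min_dotp_upper[OF Q, of eps'] unfolding dd_def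
    by (simp add: algebra_simps)
  show ?thesis
  proof (cases "\<exists>i. eps i \<noteq> 0")
    case True
    define S where "S = (\<lambda>eps. real_of_ereal (deg_eps eps r) / norm_inf eps) ` {eps. \<exists>i. eps i \<noteq> 0}"
    have Sval: "real_of_ereal (deg_eps eps' r) = dd eps'" for eps'
      by (simp add: deg_eps_def vr)
    have "bdd_below S"
      unfolding bdd_below_def
    proof (intro exI ballI)
      fix x assume "x \<in> S"
      then obtain eps' i where x: "x = real_of_ereal (deg_eps eps' r) / norm_inf eps'" "eps' i \<noteq> 0"
        unfolding S_def by blast
      have np: "0 < norm_inf eps'" using norm_inf_pos[of eps' i] x(2) by blast
      have "- (kpoly P + kpoly Q) \<le> dd eps' / norm_inf eps'"
        using ddlb[of eps'] np by (simp add: le_divide_eq algebra_simps)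
      then show "- (kpoly P + kpoly Q) \<le> x" using x(1) Sval by simp
    qed
    moreover have "dd eps / norm_inf eps \<in> S" unfolding S_def using True
      by (intro image_eqI[of _ _ eps]) (auto simp: Sval)
    ultimately have "Inf S \<le> dd eps / norm_inf eps" by (intro cInf_lower)
    moreover have "rdeg r = - Inf S" unfolding rdeg_def S_def by simp
    moreover have np: "0 < norm_inf eps" using True norm_inf_pos by blast
    ultimately have "- rdeg r \<le> dd eps / norm_inf eps" by simp
    then have "- rdeg r * norm_inf eps \<le> dd eps" using np by (simp add: le_divide_eq)
    then show ?thesis by (simp add: vr)
  next
    case False
    then have e0: "eps = (\<lambda>i. 0)" by auto
    have z: "dotp eps = (\<lambda>a. 0)" unfolding dotp_def e0 by simp
    obtain a where "a \<in> Poly_Mapping.keys P" using P by fastforce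
    then have "dotp eps ` Poly_Mapping.keys P = {0}" unfolding z by blast
    moreover obtain b where "b \<in> Poly_Mapping.keys Q" using Q by fastforce
    then have "dotp eps ` Poly_Mapping.keys Q = {0}" unfolding z by blast
    ultimately have "dotp eps ` Poly_Mapping.keys P = {0}" "dotp eps ` Poly_Mapping.keys Q = {0}"
      by auto
    then have "dd eps = 0" unfolding dd_def by simp
    then show ?thesis using e0 by (simp add: vr norm_inf_zero)
  qed
qed

lemma Min_scale:
  assumes "finite K" "K \<noteq> {}" "0 \<le> (e::real)"
  shows "Min ((\<lambda>a. e * g a) ` K) = e * Min (g ` K)"
proof -
  have m: "mono (\<lambda>x::real. e * x)" by (rule monoI) (simp add: mult_left_mono assms(3))
  have "e * Min (g ` K) = Min ((\<lambda>x. e * x) ` g ` K)"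
    using assms by (intro mono_Min_commute[OF m]) auto
  then show ?thesis by (simp add: image_image)
qed


lemma key:
  fixes f :: "'n::{finite,linorder} pser" and u :: "'n \<Rightarrow> real"
  assumes inR: "in_R f" and vm: "val f = ereal m" and fr: "f m = Fract P Q" and Q: "Q \<noteq> 0"
  shows "\<forall>\<^sub>F e in at_right (0::real). val (pser_subst (\<lambda>i. e * u i) f) =
     ereal (m + e * (Min (dotp u ` Poly_Mapping.keys P) - Min (dotp u ` Poly_Mapping.keys Q)))"
proof -
  have pf: "is_pser f" using inR unfolding in_R_def by blast
  have fm: "f m \<noteq> 0" using val_attained[OF pf vm] .
  have P: "P \<noteq> 0" using fm fr Fract_nz_num by metis
  have mmin: "m \<le> t" if "f t \<noteq> 0" for t
  proof -
    have "val f \<le> ereal t" using that by (rule val_le)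
    then show ?thesis using vm by simp
  qed
  define X where "X = (SUP t\<in>{t. f t \<noteq> 0 \<and> ereal t > val f}. ereal (rdeg (f t) / (t - real_of_ereal (val f))))"
  have X: "X < \<infinity>" using inR unfolding in_R_def X_def by blast
  obtain C where C: "X \<le> ereal C"
  proof (cases X)
    case (real r) then show ?thesis using that[of r] by simp
  next
    case PInf then show ?thesis using X by simp
  next
    case MInf then show ?thesis using that[of 0] by simp
  qed
  define C0 where "C0 = max C 0"
  have C0: "0 \<le> C0" unfolding C0_def by simp
  have rdegb: "rdeg (f t) \<le> C0 * (t - m)" if "f t \<noteq> 0" "m < t" for t
  proof -
    have "ereal (rdeg (f t) / (t - real_of_ereal (val f))) \<le> X"
      unfolding X_def using that vm by (intro SUP_upper) auto
    then have "ereal (rdeg (f t) / (t - m)) \<le> X" using vm by simp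
    then have "ereal (rdeg (f t) / (t - m)) \<le> ereal C" by (rule order_trans[OF _ C])
    then have "rdeg (f t) / (t - m) \<le> C" by simp
    then have "rdeg (f t) \<le> C * (t - m)" using that by (simp add: divide_le_eq)
    also have "\<dots> \<le> C0 * (t - m)" unfolding C0_def using that by (intro mult_right_mono) auto
    finally show ?thesis .
  qed
  define F where "F = {t. f t \<noteq> 0 \<and> t \<le> m + 1 \<and> m < t}"
  have finF: "finite F"
  proof -
    have "F \<subseteq> {t. f t \<noteq> 0 \<and> t \<le> m + 1}" unfolding F_def by blast
    moreover have "finite {t. f t \<noteq> 0 \<and> t \<le> m + 1}" using pf unfolding is_pser_def by blast
    ultimately show ?thesis by (rule finite_subset)
  qed
  define \<delta> where "\<delta> = Min (insert 1 ((\<lambda>t. t - m) ` F))"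
  have dpos: "0 < \<delta>" unfolding \<delta>_def using finF by (subst Min_gr_iff) (auto simp: F_def)
  have dgap: "m + \<delta> \<le> t" if "f t \<noteq> 0" "m < t" for t
  proof (cases "t \<le> m + 1")
    case True
    then have "t \<in> F" using that unfolding F_def by blast
    then have "\<delta> \<le> t - m" unfolding \<delta>_def using finF by (intro Min_le) auto
    then show ?thesis by simp
  next
    case False
    have "\<delta> \<le> 1" unfolding \<delta>_def using finF by (intro Min_le) auto
    then show ?thesis using False by simp
  qed
  define D where "D = Min (dotp u ` Poly_Mapping.keys P) - Min (dotp u ` Poly_Mapping.keys Q)"
  define U where "U = norm_inf u"
  have U: "0 \<le> U" unfolding U_def by (rule norm_inf_nonneg)
  define e0 where "e0 = min (\<delta> / (2 * (\<bar>D\<bar> + 1))) (1 / (2 * (C0 * U + 1)))"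
  have CU: "0 \<le> C0 * U" using C0 U by simp
  have e0pos: "0 < e0" unfolding e0_def using dpos CU by (simp add: add_nonneg_pos)
  have "\<forall>\<^sub>F e in at_right (0::real). e \<in> {0<..<e0}" by (rule eventually_at_right_real[OF e0pos])
  then show ?thesis
  proof (rule eventually_mono)
    fix e :: real assume "e \<in> {0<..<e0}"
    then have e: "0 < e" "e < e0" by auto
    define eps where "eps = (\<lambda>i. e * u i)"
    define N where "N = norm_inf eps"
    have N: "0 \<le> N" "N \<le> e * U" unfolding N_def eps_def U_def
      using norm_inf_nonneg apply blast
      using norm_inf_scale[of e u] e by simp
    have h1: "C0 * e * U \<le> 1 / 2"
    proof -
      have "e \<le> 1 / (2 * (C0 * U + 1))" using e unfolding e0_def by simp
      then have "e * (2 * (C0 * U + 1)) \<le> 1" using CU by (simp add: le_divide_eq)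
      then show ?thesis using e CU by (simp add: algebra_simps)
    qed
    have h2: "e * \<bar>D\<bar> < \<delta> / 2"
    proof -
      have "e < \<delta> / (2 * (\<bar>D\<bar> + 1))" using e unfolding e0_def by simp
      then have "e * (2 * (\<bar>D\<bar> + 1)) < \<delta>" by (simp add: less_divide_eq add_pos_nonneg)
      then show ?thesis using e by (simp add: algebra_simps)
    qed
    have dscale: "dotp eps ` K = (\<lambda>a. e * dotp u a) ` K" for K
      unfolding eps_def by (simp add: dotp_scale)
    have vRm: "val (rat_subst eps (f m)) = ereal (e * D)"
    proof -
      have "val (rat_subst eps (f m)) =
          ereal (Min (dotp eps ` Poly_Mapping.keys P) - Min (dotp eps ` Poly_Mapping.keys Q))"
        by (rule val_rat_subst[OF fr Q P])
      also have "Min (dotp eps ` Poly_Mapping.keys P) = e * Min (dotp u ` Poly_Mapping.keys P)"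
        unfolding dscale using P e by (intro Min_scale) auto
      also have "Min (dotp eps ` Poly_Mapping.keys Q) = e * Min (dotp u ` Poly_Mapping.keys Q)"
        unfolding dscale using Q e by (intro Min_scale) auto
      finally show ?thesis unfolding D_def by (simp add: algebra_simps)
    qed
    have Rm_nz: "rat_subst eps (f m) (e * D) \<noteq> 0"
      by (rule val_attained[OF is_pser_rat_subst vRm])
    have Rm_lb: "e * D \<le> x" if "rat_subst eps (f m) x \<noteq> 0" for x
    proof -
      have "val (rat_subst eps (f m)) \<le> ereal x" using that by (rule val_le)
      then show ?thesis using vRm by simp
    qed
    have Rt_lb: "- (t - m) / 2 \<le> x" if t: "f t \<noteq> 0" "m < t" and x: "rat_subst eps (f t) x \<noteq> 0" for t x
    proof -
      have "ereal (- rdeg (f t) * N) \<le> val (rat_subst eps (f t))"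
        unfolding N_def by (rule rdeg_bound[OF t(1)])
      also have "\<dots> \<le> ereal x" using x by (rule val_le)
      finally have a: "- rdeg (f t) * N \<le> x" by simp
      have "rdeg (f t) * N \<le> (C0 * (t - m)) * N" using rdegb[OF t] N(1) by (rule mult_right_mono)
      also have "\<dots> \<le> (C0 * (t - m)) * (e * U)" using N(2) C0 t(2) by (intro mult_left_mono) auto
      also have "\<dots> = (C0 * e * U) * (t - m)" by (simp add: algebra_simps)
      also have "\<dots> \<le> (1 / 2) * (t - m)" using h1 t(2) by (intro mult_right_mono) auto
      finally show ?thesis using a by simp
    qed
    define s0 where "s0 = m + e * D"
    have eDb: "e * D < \<delta> / 2" using h2 e by (smt (verit) abs_ge_self mult_left_mono)
    have T0: "{t. f t \<noteq> 0 \<and> rat_subst eps (f t) (s0 - t) \<noteq> 0} = {m}"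
    proof
      show "{m} \<subseteq> {t. f t \<noteq> 0 \<and> rat_subst eps (f t) (s0 - t) \<noteq> 0}"
        using fm Rm_nz unfolding s0_def by simp
      show "{t. f t \<noteq> 0 \<and> rat_subst eps (f t) (s0 - t) \<noteq> 0} \<subseteq> {m}"
      proof
        fix t assume "t \<in> {t. f t \<noteq> 0 \<and> rat_subst eps (f t) (s0 - t) \<noteq> 0}"
        then have t: "f t \<noteq> 0" "rat_subst eps (f t) (s0 - t) \<noteq> 0" by auto
        have "\<not> m < t"
        proof
          assume mt: "m < t"
          have "- (t - m) / 2 \<le> s0 - t" using Rt_lb[OF t(1) mt t(2)] .
          moreover have "m + \<delta> \<le> t" using dgap[OF t(1) mt] .
          ultimately show False using eDb unfolding s0_def by simp
        qed
        then show "t \<in> {m}" using mmin[OF t(1)] by simp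
      qed
    qed
    have v0: "pser_subst eps f s0 = rat_subst eps (f m) (e * D)"
    proof -
      have "pser_subst eps f s0 = (\<Sum>t\<in>{t. f t \<noteq> 0 \<and> rat_subst eps (f t) (s0 - t) \<noteq> 0}. rat_subst eps (f t) (s0 - t))"
        unfolding pser_subst_def by (rule refl)
      also have "\<dots> = rat_subst eps (f m) (s0 - m)" unfolding T0 by simp
      finally show ?thesis unfolding s0_def by simp
    qed
    have vlow: "pser_subst eps f s = 0" if "s < s0" for s
    proof -
      have "{t. f t \<noteq> 0 \<and> rat_subst eps (f t) (s - t) \<noteq> 0} = {}"
      proof (rule equals0I)
        fix t assume "t \<in> {t. f t \<noteq> 0 \<and> rat_subst eps (f t) (s - t) \<noteq> 0}"
        then have t: "f t \<noteq> 0" "rat_subst eps (f t) (s - t) \<noteq> 0" by auto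
        show False
        proof (cases "m < t")
          case True
          have "- (t - m) / 2 \<le> s - t" using Rt_lb[OF t(1) True t(2)] .
          moreover have "m + \<delta> \<le> t" using dgap[OF t(1) True] .
          ultimately show False using eDb that unfolding s0_def by simp
        next
          case False
          then have "t = m" using mmin[OF t(1)] by simp
          then have "e * D \<le> s - m" using Rm_lb t(2) by blast
          then show False using that unfolding s0_def by simp
        qed
      qed
      then show ?thesis unfolding pser_subst_def by (simp only: sum.empty)
    qed
    have "val (pser_subst eps f) = ereal s0"
      using v0 Rm_nz vlow by (intro val_eqI) auto
    then show "val (pser_subst (\<lambda>i. e * u i) f) =
     ereal (m + e * (Min (dotp u ` Poly_Mapping.keys P) - Min (dotp u ` Poly_Mapping.keys Q)))"
      unfolding eps_def s0_def D_def .
  qed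
qed

theorem corollary2p4:
  fixes f g :: "'n::{finite,linorder} pser" and u :: "'n \<Rightarrow> real"
  assumes "in_R f" and "in_R g"
    and "val f = val g"
    and "\<forall>\<^sub>F e in at_right (0::real).
           val (pser_subst (\<lambda>i. e * u i) f) < val (pser_subst (\<lambda>i. e * u i) g)"
  shows "val (\<lambda>t. f t + g t) = val f \<and> lc (\<lambda>t. f t + g t) = lc f + lc g"
proof -
  have pf: "is_pser f" using assms(1) unfolding in_R_def by blast
  have pg: "is_pser g" using assms(2) unfolding in_R_def by blast
  show ?thesis
  proof (cases "val f = \<infinity>")
    case True
    then have f0: "\<forall>t. f t = 0" by (simp add: val_top_iff)
    have g0: "\<forall>t. g t = 0" using True assms(3) by (simp add: val_top_iff)
    have h: "(\<lambda>t. f t + g t) = (\<lambda>t. 0)" using f0 g0 by simp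
    have "val (\<lambda>t. f t + g t) = \<infinity>" by (subst val_top_iff) (simp add: f0 g0)
    then have "val (\<lambda>t. f t + g t) = val f" using True by simp
    moreover have "lc (\<lambda>t. f t + g t) = lc f + lc g" unfolding lc_def using f0 g0 by simp
    ultimately show ?thesis by simp
  next
    case False
    then obtain t0 where "f t0 \<noteq> 0" using val_top_iff by blast
    then obtain m where m: "f m \<noteq> 0" "\<forall>t. f t \<noteq> 0 \<longrightarrow> m \<le> t" using pser_min[OF pf] by blast
    have vf: "val f = ereal m" using m by (intro val_eqI) auto
    have vg: "val g = ereal m" using vf assms(3) by simp
    have gm: "g m \<noteq> 0" using val_attained[OF pg vg] .
    have flow: "f t = 0" if "t < m" for t using m that by force
    have glow: "g t = 0" if "t < m" for t
    proof (rule ccontr)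
      assume "g t \<noteq> 0"
      then have "val g \<le> ereal t" by (rule val_le)
      then show False using vg that by simp
    qed
    show ?thesis
    proof (cases "f m + g m = 0")
      case False
      have "val (\<lambda>t. f t + g t) = ereal m" using False flow glow by (intro val_eqI) auto
      moreover have "lc (\<lambda>t. f t + g t) = lc f + lc g" unfolding lc_def using vf vg
        by (simp add: \<open>val (\<lambda>t. f t + g t) = ereal m\<close>)
      ultimately show ?thesis using vf by simp
    next
      case True
      obtain P Q where fr: "f m = Fract P Q" and Q: "Q \<noteq> 0" by (cases "f m") auto
      have "g m = - f m" using True by (simp add: eq_neg_iff_add_eq_0 add.commute)
      then have gr: "g m = Fract (- P) Q" using fr by simp
      note k1 = key[OF assms(1) vf fr Q, of u]
      note k2 = key[OF assms(2) vg gr Q, of u]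
      have "\<forall>\<^sub>F e in at_right (0::real). False"
        using eventually_conj[OF assms(4) eventually_conj[OF k1 k2]]
        by (rule eventually_mono) (auto simp: keys_uminus')
      then show ?thesis using trivial_limit_at_right_real[of 0] unfolding trivial_limit_def by blast
    qed
  qed
qed

end
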